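(* Let $J,K\in\mathbb{R}\cup\{\infty\}$. Each of the following product measures $\mu\times\nu$ of probability measures on $\mathbb{R}$ satisfies $F^{(J,K)}_{udK}(\mu\times\nu)=\mu\times\nu$. (a)(i) $\mu\times\nu=\mathrm{stExp}(\lambda,c,J-c)\times\mathrm{stExp}(\lambda,c,K-c)$, where $c<\min\{J/2,K/2\}$ is finite and $\lambda\in\mathbb{R}$ if $\max\{J,K\}<\infty$, $\lambda>0$ if $\max\{J,K\}=\infty$. (a)(ii) $\mu\times\nu=\mathrm{sstbGeo}(1-\theta,\frac{c}{m},\frac{J-c}{m},\kappa,m)\times\mathrm{sstbGeo}(1-\theta,\frac{c}{m},\frac{K-c}{m},\kappa,m)$, where $c<\min\{J/2,K/2\}$ is finite, $m>0$, $c,J,K\in m\mathbb{Z}\cup\{\infty\}$, and one of the following holds: $J-2c,K-2c\in m\mathbb{Z}\cup\{\infty\}$, $\theta\in(0,1)$, $\kappa=1$; or $J-2c,K-2c\in2m\mathbb{Z}\cup\{\infty\}$, $\theta\in(0,1)$, $\kappa\in(0,\infty)\setminus\{1\}$; or $J-2c,K-2c\in m\mathbb{Z}$, $\theta\ge1$, $\kappa=1$; or $J-2c,K-2c\in2m\mathbb{Z}\cup\{\infty\}$, $\theta\ge1$, $\kappa\in(0,\infty)\setminus\{1\}$. (b) If $J=K$: $\mu\times\nu=m\times m$ for any probability measure $m$ on $\mathbb{R}$. (c) If $J<K$: (i) $\mu\times\nu=m\times m$ for any probability measure $m$ supported on $(-\infty,J/2]$; (ii) $\mu\times\nu=\delta_{J/2}\times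 m$ for any probability measure $m$ supported on $[J/2,K-J/2]$; (iii) if moreover $K<\infty$, $\mu\times\nu=m\times(m+L)$ for any probability measure $m$ supported on $[J/2,\infty)$, where $L:=K-J$ and $(m+L)(A):=m(\{x-L:x\in A\})$.
   Context: The ultra-discrete KdV map $F^{(J,K)}_{udK}:\mathbb{R}^2\to\mathbb{R}^2$ is $F^{(J,K)}_{udK}(x,u):=\big(u-\max\{x+u-J,0\}+\max\{x+u-K,0\},\;x-\max\{x+u-K,0\}+\max\{x+u-J,0\}\big)$, with the convention that a term $\max\{x+u-\infty,0\}$ equals $0$. $F(m):=m\circ F^{-1}$ is the pushforward; $\delta_x$ is the Dirac mass at $x$. Distributions: $\mathrm{stExp}(\lambda,c_1,c_2)$ ($c_1<c_2$) has density proportional to $e^{-\lambda x}\mathbf{1}_{[c_1,c_2]}(x)$, with $c_2=\infty$ allowed when $\lambda>0$. For $\theta>0$, $M\in\mathbb{Z}$, $N\in\mathbb{Z}\cup\{\infty\}$ with $M\le N$, $\kappa>0$, $m>0$, $X\sim\mathrm{sstbGeo}(1-\theta,M,N,\kappa,m)$ means $\mathbf{P}(X=mx)=Z^{-1}\theta^x\kappa^{\iota(x)}$ for $x\in\{M,M+1,\dots,N\}$, where $\iota(x)=0$ for $x$ even and $1$ for $x$ odd, $Z$ a normalizing constant (if $N=\infty$ one needs $\theta<1$). *)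

theory Defs
  imports "HOL-Probability.Probability"
begin

text \<open>Parameters J, K range over \<real> \<union> {\<infinity>}; we use ereal (with J, K \<noteq> -\<infinity> assumed).
  The term max{s - J, 0}, with the convention that it is 0 when J = \<infinity>.\<close>
definition udK_term :: "ereal \<Rightarrow> real \<Rightarrow> real" where
  "udK_term J s = (case J of ereal j \<Rightarrow> max (s - j) 0 | _ \<Rightarrow> 0)"

definition udK :: "ereal \<Rightarrow> ereal \<Rightarrow> real \<times> real \<Rightarrow> real \<times> real" where
  "udK J K p = (let x = fst p; u = snd p in
     (u - udK_term J (x + u) + udK_term K (x + u),
      x - udK_term K (x + u) + udK_term J (x + u)))"

definition udK_invariant :: "ereal \<Rightarrow> ereal \<Rightarrow> real measure \<Rightarrow> real measure \<Rightarrow> bool" where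
  "udK_invariant J K \<mu> \<nu> \<longleftrightarrow>
     distr (\<mu> \<Otimes>\<^sub>M \<nu>) (borel \<Otimes>\<^sub>M borel) (udK J K) = \<mu> \<Otimes>\<^sub>M \<nu>"

definition real_prob :: "real measure \<Rightarrow> bool" where
  "real_prob M \<longleftrightarrow> prob_space M \<and> sets M = sets borel"

definition stExp_weight :: "real \<Rightarrow> real \<Rightarrow> ereal \<Rightarrow> real \<Rightarrow> ennreal" where
  "stExp_weight l c1 c2 x =
     ennreal (exp (- l * x)) * indicator {y. c1 \<le> y \<and> ereal y \<le> c2} x"

definition stExp :: "real \<Rightarrow> real \<Rightarrow> ereal \<Rightarrow> real measure" where
  "stExp l c1 c2 = density lborel
     (\<lambda>x. stExp_weight l c1 c2 x / (\<integral>\<^sup>+ y. stExp_weight l c1 c2 y \<partial>lborel))"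

text \<open>sstbGeo(p, M, N, kappa, m) with theta = 1 - p:
  P(X = m x) = Z^-1 theta^x kappa^iota(x) for integers x with M \<le> x \<le> N (N may be \<infinity>).\<close>
definition sstbGeo_weight :: "real \<Rightarrow> real \<Rightarrow> ereal \<Rightarrow> real \<Rightarrow> int \<Rightarrow> ennreal" where
  "sstbGeo_weight p M N \<kappa> x =
     (if M \<le> real_of_int x \<and> ereal (real_of_int x) \<le> N
      then ennreal ((1 - p) powi x * (if even x then 1 else \<kappa>)) else 0)"

definition sstbGeo :: "real \<Rightarrow> real \<Rightarrow> ereal \<Rightarrow> real \<Rightarrow> real \<Rightarrow> real measure" where
  "sstbGeo p M N \<kappa> m = distr
     (density (count_space UNIV)
        (\<lambda>x. sstbGeo_weight p M N \<kappa> x / (\<integral>\<^sup>+ y. sstbGeo_weight p M N \<kappa> y \<partial>count_space UNIV)))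
     borel (\<lambda>x. m * real_of_int x)"

definition in_mZ_inf :: "real \<Rightarrow> ereal \<Rightarrow> bool" where
  "in_mZ_inf m J \<longleftrightarrow> J = \<infinity> \<or> (\<exists>k::int. J = ereal (m * real_of_int k))"

definition in_mZ :: "real \<Rightarrow> ereal \<Rightarrow> bool" where
  "in_mZ m J \<longleftrightarrow> (\<exists>k::int. J = ereal (m * real_of_int k))"

end

theory Submission
  imports Defs
begin


definition phiK :: "ereal \<Rightarrow> ereal \<Rightarrow> real \<Rightarrow> real" where
  "phiK J K s = udK_term K s - udK_term J s"

lemma udK_phi: "udK J K (x,u) = (u + phiK J K (x+u), x - phiK J K (x+u))"
  by (simp add: udK_def phiK_def Let_def)

lemma udK_invol: "udK J K (udK J K p) = p"
  by (cases p) (simp add: udK_phi add.commute)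

lemma udK_sum: "fst (udK J K p) + snd (udK J K p) = fst p + snd p"
  by (cases p) (simp add: udK_phi)

lemma udK_term_meas[measurable]: "udK_term J \<in> borel_measurable borel"
proof (cases J)
  case (real r)
  then have "udK_term J = (\<lambda>s. max (s - r) 0)" by (simp add: fun_eq_iff udK_term_def)
  then show ?thesis by simp
next
  case PInf
  then have "udK_term J = (\<lambda>s. 0)" by (simp add: fun_eq_iff udK_term_def)
  then show ?thesis by simp
next
  case MInf
  then have "udK_term J = (\<lambda>s. 0)" by (simp add: fun_eq_iff udK_term_def)
  then show ?thesis by simp
qed

lemma phiK_meas[measurable]: "phiK J K \<in> borel_measurable borel"
  unfolding phiK_def by measurable

lemma udK_meas[measurable]: "udK J K \<in> measurable (borel \<Otimes>\<^sub>M borel) (borel \<Otimes>\<^sub>M borel)"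
proof -
  have "udK J K = (\<lambda>p. (snd p + phiK J K (fst p + snd p), fst p - phiK J K (fst p + snd p)))"
    by (auto simp: udK_phi fun_eq_iff)
  then show ?thesis by simp
qed

definition inR :: "ereal \<Rightarrow> ereal \<Rightarrow> real \<Rightarrow> real \<times> real \<Rightarrow> bool" where
  "inR J K c p \<longleftrightarrow> c \<le> fst p \<and> ereal (fst p) \<le> J - ereal c \<and> c \<le> snd p \<and> ereal (snd p) \<le> K - ereal c"

lemma inR_udK:
  assumes "J \<noteq> -\<infinity>" "K \<noteq> -\<infinity>" "ereal c < J/2" "ereal c < K/2" "inR J K c p"
  shows "inR J K c (udK J K p)"
  using assms
  apply (cases p; cases J; cases K)
  apply (auto simp: inR_def udK_def udK_term_def Let_def max_def)
  done


lemma meas_LL: "f \<in> borel_measurable (borel \<Otimes>\<^sub>M borel) \<Longrightarrow> f \<in> borel_measurable (lborel \<Otimes>\<^sub>M lborel)"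
  using measurable_cong_sets[OF sets_pair_measure_cong[OF sets_lborel sets_lborel] refl] by blast

lemma shift_int:
  fixes g :: "real \<Rightarrow> ennreal"
  assumes "g \<in> borel_measurable borel"
  shows "(\<integral>\<^sup>+u. g u \<partial>lborel) = (\<integral>\<^sup>+s. g (t + s) \<partial>lborel)"
  using nn_integral_real_affine[OF assms, of 1 t] by simp

lemma lborel_T:
  fixes H :: "real \<times> real \<Rightarrow> ennreal"
  assumes H[measurable]: "H \<in> borel_measurable (borel \<Otimes>\<^sub>M borel)" and [measurable]: "\<phi> \<in> borel_measurable borel"
  shows "(\<integral>\<^sup>+p. H (snd p + \<phi> (fst p + snd p), fst p - \<phi> (fst p + snd p)) \<partial>(lborel \<Otimes>\<^sub>M lborel))
     = integral\<^sup>N (lborel \<Otimes>\<^sub>M lborel) H"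
proof -
  have m1: "(\<lambda>p. H (snd p + \<phi> (fst p + snd p), fst p - \<phi> (fst p + snd p))) \<in> borel_measurable (lborel \<Otimes>\<^sub>M lborel)"
    by (rule meas_LL) measurable
  have "(\<integral>\<^sup>+p. H (snd p + \<phi> (fst p + snd p), fst p - \<phi> (fst p + snd p)) \<partial>(lborel \<Otimes>\<^sub>M lborel))
     = (\<integral>\<^sup>+x. \<integral>\<^sup>+u. H (u + \<phi> (x + u), x - \<phi> (x + u)) \<partial>lborel \<partial>lborel)"
    using lborel.nn_integral_fst[OF m1] by simp
  also have "\<dots> = (\<integral>\<^sup>+x. \<integral>\<^sup>+s. H (s - x + \<phi> s, x - \<phi> s) \<partial>lborel \<partial>lborel)"
  proof (rule nn_integral_cong)
    fix x :: real
    show "(\<integral>\<^sup>+u. H (u + \<phi> (x + u), x - \<phi> (x + u)) \<partial>lborel) = (\<integral>\<^sup>+s. H (s - x + \<phi> s, x - \<phi> s) \<partial>lborel)"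
      using shift_int[of "\<lambda>u. H (u + \<phi> (x + u), x - \<phi> (x + u))" "-x"] by simp
  qed
  also have "\<dots> = (\<integral>\<^sup>+s. \<integral>\<^sup>+x. H (s - x + \<phi> s, x - \<phi> s) \<partial>lborel \<partial>lborel)"
    by (rule lborel_pair.Fubini'[symmetric]) (rule meas_LL, measurable)
  also have "\<dots> = (\<integral>\<^sup>+s. \<integral>\<^sup>+y. H (s - y, y) \<partial>lborel \<partial>lborel)"
  proof (rule nn_integral_cong)
    fix s :: real
    show "(\<integral>\<^sup>+x. H (s - x + \<phi> s, x - \<phi> s) \<partial>lborel) = (\<integral>\<^sup>+y. H (s - y, y) \<partial>lborel)"
      using shift_int[of "\<lambda>x. H (s - x + \<phi> s, x - \<phi> s)" "\<phi> s"] by simp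
  qed
  also have "\<dots> = (\<integral>\<^sup>+y. \<integral>\<^sup>+s. H (s - y, y) \<partial>lborel \<partial>lborel)"
    by (rule lborel_pair.Fubini') (rule meas_LL, measurable)
  also have "\<dots> = (\<integral>\<^sup>+y. \<integral>\<^sup>+z. H (z, y) \<partial>lborel \<partial>lborel)"
  proof (rule nn_integral_cong)
    fix y :: real
    show "(\<integral>\<^sup>+s. H (s - y, y) \<partial>lborel) = (\<integral>\<^sup>+z. H (z, y) \<partial>lborel)"
      using shift_int[of "\<lambda>s. H (s - y, y)" "y"] by simp
  qed
  also have "\<dots> = integral\<^sup>N (lborel \<Otimes>\<^sub>M lborel) H"
    by (rule lborel_pair.nn_integral_snd) (rule meas_LL, fact)
  finally show ?thesis .
qed


lemma distr_density_inv:
  assumes F[measurable]: "F \<in> measurable N N"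
  and pres: "\<And>f. f \<in> borel_measurable N \<Longrightarrow> (\<integral>\<^sup>+x. f (F x) \<partial>N) = integral\<^sup>N N f"
  and w[measurable]: "w \<in> borel_measurable N" and inv: "\<And>x. x \<in> space N \<Longrightarrow> w (F x) = w x"
  shows "distr (density N w) N F = density N w"
proof (rule measure_eqI)
  show "sets (distr (density N w) N F) = sets (density N w)" by simp
  fix A assume "A \<in> sets (distr (density N w) N F)"
  then have A[measurable]: "A \<in> sets N" by simp
  have F': "F \<in> measurable (density N w) N" using F by simp
  have "emeasure (distr (density N w) N F) A = emeasure (density N w) (F -` A \<inter> space N)"
    using emeasure_distr[OF F' A] by simp
  also have "\<dots> = (\<integral>\<^sup>+x. w x * indicator (F -` A \<inter> space N) x \<partial>N)"
    by (rule emeasure_density) (auto intro: measurable_sets[OF F A])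
  also have "\<dots> = (\<integral>\<^sup>+x. (\<lambda>y. w y * indicator A y) (F x) \<partial>N)"
    by (rule nn_integral_cong) (auto simp: inv indicator_def measurable_space[OF F])
  also have "\<dots> = (\<integral>\<^sup>+y. w y * indicator A y \<partial>N)"
    by (rule pres) measurable
  also have "\<dots> = emeasure (density N w) A"
    by (rule emeasure_density[symmetric]) (auto)
  finally show "emeasure (distr (density N w) N F) A = emeasure (density N w) A" .
qed

lemma finite_normalized_density:
  assumes [measurable]: "w \<in> borel_measurable M"
  shows "finite_measure (density M (\<lambda>x. w x / integral\<^sup>N M w))"
proof (rule finite_measureI)
  have "emeasure (density M (\<lambda>x. w x / integral\<^sup>N M w)) (space (density M (\<lambda>x. w x / integral\<^sup>N M w)))
     = (\<integral>\<^sup>+x. w x / integral\<^sup>N M w * indicator (space M) x \<partial>M)"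
    by (simp add: emeasure_density)
  also have "\<dots> = (\<integral>\<^sup>+x. w x / integral\<^sup>N M w \<partial>M)"
    by (rule nn_integral_cong) auto
  also have "\<dots> = integral\<^sup>N M w / integral\<^sup>N M w"
    by (rule nn_integral_divide) simp
  finally have eq: "emeasure (density M (\<lambda>x. w x / integral\<^sup>N M w)) (space (density M (\<lambda>x. w x / integral\<^sup>N M w))) = integral\<^sup>N M w / integral\<^sup>N M w" .
  have "integral\<^sup>N M w / integral\<^sup>N M w \<noteq> \<infinity>"
  proof (cases "integral\<^sup>N M w = 0")
    case True then show ?thesis by simp
  next
    case False
    show ?thesis
    proof (cases "integral\<^sup>N M w = \<infinity>")
      case True then show ?thesis by (simp add: divide_ennreal_def)
    next
      case False2: False
      then show ?thesis using False by (simp add: top.not_eq_extremum)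
    qed
  qed
  then show "emeasure (density M (\<lambda>x. w x / integral\<^sup>N M w)) (space (density M (\<lambda>x. w x / integral\<^sup>N M w))) \<noteq> \<infinity>"
    using eq by simp
qed

lemma distr_count_bij_inv:
  assumes G: "bij G" and inv: "\<And>p. r (G p) = r p"
  shows "distr (density (count_space UNIV) r) (count_space UNIV) G = density (count_space UNIV) r"
proof (rule measure_eqI)
  show "sets (distr (density (count_space UNIV) r) (count_space UNIV) G) = sets (density (count_space UNIV) r)" by simp
  fix A :: "'a set"
  have "emeasure (distr (density (count_space UNIV) r) (count_space UNIV) G) A
      = emeasure (density (count_space UNIV) r) (G -` A)"
    by (subst emeasure_distr) auto
  also have "\<dots> = (\<integral>\<^sup>+x. r x * indicator (G -` A) x \<partial>count_space UNIV)"
    by (rule emeasure_density) auto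
  also have "\<dots> = (\<integral>\<^sup>+x. (\<lambda>y. r y * indicator A y) (G x) \<partial>count_space UNIV)"
    by (rule nn_integral_cong) (auto simp: inv indicator_def)
  also have "\<dots> = (\<integral>\<^sup>+y. r y * indicator A y \<partial>count_space UNIV)"
    by (rule nn_integral_bij_count_space) (use G in \<open>simp add: bij_def\<close>)
  also have "\<dots> = emeasure (density (count_space UNIV) r) A"
    by (rule emeasure_density[symmetric]) auto
  finally show "emeasure (distr (density (count_space UNIV) r) (count_space UNIV) G) A = emeasure (density (count_space UNIV) r) A" .
qed


lemma inR_udK_iff:
  assumes "J \<noteq> -\<infinity>" "K \<noteq> -\<infinity>" "ereal c < J/2" "ereal c < K/2"
  shows "inR J K c (udK J K p) \<longleftrightarrow> inR J K c p"
  using inR_udK[OF assms, of p] inR_udK[OF assms, of "udK J K p"] udK_invol[of J K p] by auto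

lemma sigma_finite_norm:
  assumes "w \<in> borel_measurable M"
  shows "sigma_finite_measure (density M (\<lambda>x. w x / integral\<^sup>N M w))"
  using finite_normalized_density[OF assms] by (simp add: finite_measure_def)

lemma stExp_w_prod:
  "stExp_weight l c (J - ereal c) (fst p) * stExp_weight l c (K - ereal c) (snd p)
   = ennreal (exp (- l * (fst p + snd p))) * (if inR J K c p then 1 else 0)"
  by (cases p) (auto simp: stExp_weight_def inR_def indicator_def ennreal_mult'[symmetric] mult_exp_exp algebra_simps)

lemma stExp_weight_meas[measurable]: "stExp_weight l c1 c2 \<in> borel_measurable borel"
  unfolding stExp_weight_def by measurable

lemma part_ai:
  assumes a: "J \<noteq> -\<infinity>" "K \<noteq> -\<infinity>" "ereal c < J/2" "ereal c < K/2"
  shows "udK_invariant J K (stExp lam c (J - ereal c)) (stExp lam c (K - ereal c))"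
proof -
  define wJ where "wJ = stExp_weight lam c (J - ereal c)"
  define wK where "wK = stExp_weight lam c (K - ereal c)"
  define ZJ where "ZJ = integral\<^sup>N lborel wJ"
  define ZK where "ZK = integral\<^sup>N lborel wK"
  have [measurable]: "wJ \<in> borel_measurable borel" "wK \<in> borel_measurable borel"
    unfolding wJ_def wK_def by measurable
  define w where "w = (\<lambda>(x,y). wJ x / ZJ * (wK y / ZK))"
  have wm[measurable]: "w \<in> borel_measurable (lborel \<Otimes>\<^sub>M lborel)"
    unfolding w_def by (rule meas_LL) measurable
  have prod: "stExp lam c (J - ereal c) \<Otimes>\<^sub>M stExp lam c (K - ereal c) = density (lborel \<Otimes>\<^sub>M lborel) w"
    unfolding stExp_def w_def wJ_def[symmetric] wK_def[symmetric] ZJ_def[symmetric] ZK_def[symmetric]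
    apply (rule pair_measure_density)
       apply simp
      apply simp
     apply (rule lborel.sigma_finite_measure_axioms)
    unfolding ZK_def by (rule sigma_finite_norm) simp
  have winv: "w (udK J K p) = w p" for p
  proof -
    have "wJ (fst (udK J K p)) * wK (snd (udK J K p)) = wJ (fst p) * wK (snd p)"
      unfolding wJ_def wK_def stExp_w_prod using inR_udK_iff[OF a] udK_sum by simp
    then show ?thesis
      unfolding w_def by (simp add: case_prod_beta divide_ennreal_def ac_simps)
  qed
  have "distr (density (lborel \<Otimes>\<^sub>M lborel) w) (borel \<Otimes>\<^sub>M borel) (udK J K)
      = distr (density (lborel \<Otimes>\<^sub>M lborel) w) (lborel \<Otimes>\<^sub>M lborel) (udK J K)"
    by (rule distr_cong) (auto intro: sets_pair_measure_cong)
  also have "\<dots> = density (lborel \<Otimes>\<^sub>M lborel) w"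
  proof (rule distr_density_inv)
    show "udK J K \<in> measurable (lborel \<Otimes>\<^sub>M lborel) (lborel \<Otimes>\<^sub>M lborel)"
      using udK_meas[of J K]
      by (simp add: measurable_cong_sets[OF sets_pair_measure_cong[OF sets_lborel sets_lborel] sets_pair_measure_cong[OF sets_lborel sets_lborel]])
    fix f :: "real \<times> real \<Rightarrow> ennreal" assume f: "f \<in> borel_measurable (lborel \<Otimes>\<^sub>M lborel)"
    then have f': "f \<in> borel_measurable (borel \<Otimes>\<^sub>M borel)"
      using measurable_cong_sets[OF sets_pair_measure_cong[OF sets_lborel sets_lborel] refl] by blast
    have "(\<lambda>x. f (udK J K x)) = (\<lambda>p. f (snd p + phiK J K (fst p + snd p), fst p - phiK J K (fst p + snd p)))"
      by (auto simp: fun_eq_iff udK_phi case_prod_beta)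
    then show "(\<integral>\<^sup>+x. f (udK J K x) \<partial>(lborel \<Otimes>\<^sub>M lborel)) = integral\<^sup>N (lborel \<Otimes>\<^sub>M lborel) f"
      using lborel_T[OF f' phiK_meas] by simp
  qed (auto simp: winv)
  finally show ?thesis unfolding udK_invariant_def prod .
qed


lemma AE_prod_borel:
  assumes sM: "sigma_finite_measure M" and sN: "sigma_finite_measure N"
    and setsM: "sets M = sets borel" and setsN: "sets N = sets borel"
    and ae1: "AE x in M. P x" and ae2: "AE y in N. Q y"
    and [measurable]: "Measurable.pred borel P" "Measurable.pred borel Q"
  shows "AE p in M \<Otimes>\<^sub>M N. P (fst p) \<and> Q (snd p)"
proof -
  interpret pair_sigma_finite M N using sM sN by (simp add: pair_sigma_finite_def)
  have ss: "sets (M \<Otimes>\<^sub>M N) = sets (borel \<Otimes>\<^sub>M borel)"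
    by (rule sets_pair_measure_cong[OF setsM setsN])
  have sp: "space (M \<Otimes>\<^sub>M N) = space (borel \<Otimes>\<^sub>M borel)"
    using sets_eq_imp_space_eq[OF ss] .
  have "{p \<in> space (borel \<Otimes>\<^sub>M borel). P (fst p) \<and> Q (snd p)} \<in> sets (borel \<Otimes>\<^sub>M borel)"
    by measurable
  then have m: "{p \<in> space (M \<Otimes>\<^sub>M N). P (fst p) \<and> Q (snd p)} \<in> sets (M \<Otimes>\<^sub>M N)"
    using ss sp by simp
  have "AE x in M. AE y in N. P (fst (x,y)) \<and> Q (snd (x,y))"
    using ae1
  proof eventually_elim
    case (elim x)
    show ?case using ae2 by eventually_elim (use elim in simp)
  qed
  then show ?thesis by (rule AE_pair_measure[OF m])
qed

lemma real_prob_sf: "real_prob M \<Longrightarrow> sigma_finite_measure M"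
  by (simp add: real_prob_def prob_space_imp_sigma_finite)

lemma swap_inv:
  assumes "sigma_finite_measure M"
  shows "distr (M \<Otimes>\<^sub>M M) (M \<Otimes>\<^sub>M M) (\<lambda>(x,y). (y,x)) = M \<Otimes>\<^sub>M M"
proof -
  interpret pair_sigma_finite M M using assms by (simp add: pair_sigma_finite_def)
  show ?thesis using distr_pair_swap[symmetric] .
qed


lemma part_b:
  assumes "real_prob M"
  shows "udK_invariant J J M M"
proof -
  have s: "sets M = sets borel" using assms by (simp add: real_prob_def)
  have "distr (M \<Otimes>\<^sub>M M) (borel \<Otimes>\<^sub>M borel) (udK J J) = distr (M \<Otimes>\<^sub>M M) (M \<Otimes>\<^sub>M M) (\<lambda>(x,y). (y,x))"
    by (rule distr_cong) (auto simp: udK_def Let_def s intro!: sets_pair_measure_cong)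
  also have "\<dots> = M \<Otimes>\<^sub>M M" by (rule swap_inv[OF real_prob_sf[OF assms]])
  finally show ?thesis unfolding udK_invariant_def .
qed


lemma part_ci:
  assumes M: "real_prob M" and JK: "J < K" "J \<noteq> -\<infinity>" and ae: "AE x in M. ereal x \<le> J / 2"
  shows "udK_invariant J K M M"
proof -
  obtain j where j: "J = ereal j" using JK by (cases J) auto
  have s: "sets M = sets borel" using M by (simp add: real_prob_def)
  have ae': "AE x in M. x \<le> j/2" using ae j by simp
  have AE: "AE p in M \<Otimes>\<^sub>M M. fst p \<le> j/2 \<and> snd p \<le> j/2"
    by (rule AE_prod_borel[OF real_prob_sf[OF M] real_prob_sf[OF M] s s ae' ae']) measurable
  have eq: "udK J K p = (\<lambda>(x,y). (y,x)) p" if "fst p \<le> j/2 \<and> snd p \<le> j/2" for p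
    using that JK j by (cases p; cases K) (auto simp: udK_def udK_term_def Let_def max_def)
  have ss: "sets (M \<Otimes>\<^sub>M M) = sets (borel \<Otimes>\<^sub>M borel)" by (rule sets_pair_measure_cong[OF s s])
  have "distr (M \<Otimes>\<^sub>M M) (borel \<Otimes>\<^sub>M borel) (udK J K) = distr (M \<Otimes>\<^sub>M M) (M \<Otimes>\<^sub>M M) (\<lambda>(x,y). (y,x))"
  proof (rule distr_cong_AE)
    show "AE x in M \<Otimes>\<^sub>M M. udK J K x = (\<lambda>(x,y). (y,x)) x" using AE by eventually_elim (rule eq)
    show "udK J K \<in> measurable (M \<Otimes>\<^sub>M M) (borel \<Otimes>\<^sub>M borel)"
      using udK_meas measurable_cong_sets[OF ss refl] by blast
  qed (auto simp: ss)
  also have "\<dots> = M \<Otimes>\<^sub>M M" by (rule swap_inv[OF real_prob_sf[OF M]])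
  finally show ?thesis unfolding udK_invariant_def .
qed


lemma part_cii:
  assumes M: "real_prob M" and JK: "J < K" "J \<noteq> -\<infinity>"
    and ae: "AE x in M. J / 2 \<le> ereal x \<and> ereal x \<le> K - J / 2"
  shows "udK_invariant J K (return borel (real_of_ereal J / 2)) M"
proof -
  obtain j where j: "J = ereal j" using JK by (cases J) auto
  have s: "sets M = sets borel" using M by (simp add: real_prob_def)
  have sR: "sets (return borel (j/2)) = sets borel" by simp
  have sfR: "sigma_finite_measure (return borel (j/2))"
    by (rule prob_space_imp_sigma_finite) (rule prob_space_return, simp)
  have ae1: "AE x in return borel (j/2). x = j/2"
    by (subst AE_return) auto
  have ae2: "AE x in M. j/2 \<le> x \<and> ereal x \<le> K - ereal (j/2)" using ae j by simp
  have AE: "AE p in return borel (j/2) \<Otimes>\<^sub>M M. fst p = j/2 \<and> (j/2 \<le> snd p \<and> ereal (snd p) \<le> K - ereal (j/2))"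
    by (rule AE_prod_borel[OF sfR real_prob_sf[OF M] sR s ae1 ae2]) measurable
  have eq: "udK J K p = p" if "fst p = j/2 \<and> (j/2 \<le> snd p \<and> ereal (snd p) \<le> K - ereal (j/2))" for p
    using that JK j by (cases p; cases K) (auto simp: udK_def udK_term_def Let_def max_def)
  have ss: "sets (return borel (j/2) \<Otimes>\<^sub>M M) = sets (borel \<Otimes>\<^sub>M borel)" by (rule sets_pair_measure_cong[OF sR s])
  have "distr (return borel (j/2) \<Otimes>\<^sub>M M) (borel \<Otimes>\<^sub>M borel) (udK J K)
     = distr (return borel (j/2) \<Otimes>\<^sub>M M) (borel \<Otimes>\<^sub>M borel) (\<lambda>p. p)"
  proof (rule distr_cong_AE)
    show "AE x in return borel (j/2) \<Otimes>\<^sub>M M. udK J K x = x" using AE by eventually_elim (rule eq)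
    show "udK J K \<in> measurable (return borel (j/2) \<Otimes>\<^sub>M M) (borel \<Otimes>\<^sub>M borel)"
      using udK_meas measurable_cong_sets[OF ss refl] by blast
    show "(\<lambda>p. p) \<in> measurable (return borel (j/2) \<Otimes>\<^sub>M M) (borel \<Otimes>\<^sub>M borel)"
      by (rule measurable_ident_sets[OF ss])
  qed (auto simp: ss)
  also have "\<dots> = return borel (j/2) \<Otimes>\<^sub>M M" by (rule distr_id2[OF ss[symmetric]])
  finally show ?thesis unfolding udK_invariant_def j by simp
qed


lemma part_ciii:
  assumes M: "real_prob M" and JK: "J < K" "J \<noteq> -\<infinity>" "K < \<infinity>"
    and ae: "AE x in M. J / 2 \<le> ereal x"
  shows "udK_invariant J K M (distr M borel (\<lambda>x. x + real_of_ereal (K - J)))"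
proof -
  obtain j where j: "J = ereal j" using JK by (cases J) auto
  obtain k where k: "K = ereal k" using JK by (cases K) auto
  define L where "L = k - j"
  have s: "sets M = sets borel" using M by (simp add: real_prob_def)
  have sfM: "sigma_finite_measure M" by (rule real_prob_sf[OF M])
  define M' where "M' = distr M borel (\<lambda>x. x + L)"
  have sM': "sets M' = sets borel" by (simp add: M'_def)
  have meas_sh: "(\<lambda>x. x + L) \<in> measurable M borel" by (subst measurable_cong_sets[OF s refl]) measurable
  have pM': "prob_space M'" unfolding M'_def
    by (rule prob_space.prob_space_distr[OF _ meas_sh]) (use M in \<open>simp add: real_prob_def\<close>)
  have sfM': "sigma_finite_measure M'" by (rule prob_space_imp_sigma_finite[OF pM'])
  have ae1: "AE x in M. j/2 \<le> x" using ae j by simp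
  have ae2: "AE y in M'. j/2 + L \<le> y"
  proof -
    have m: "{x \<in> space borel. j/2 + L \<le> x} \<in> sets borel" by measurable
    show ?thesis unfolding M'_def AE_distr_iff[OF meas_sh m] using ae1 by simp
  qed
  have AE: "AE p in M \<Otimes>\<^sub>M M'. j/2 \<le> fst p \<and> j/2 + L \<le> snd p"
    by (rule AE_prod_borel[OF sfM sfM' s sM' ae1 ae2]) measurable
  define T where "T = (\<lambda>p::real\<times>real. (snd p - L, fst p + L))"
  have eq: "udK J K p = T p" if "j/2 \<le> fst p \<and> j/2 + L \<le> snd p" for p
    using that JK j k by (cases p) (auto simp: udK_def udK_term_def Let_def max_def T_def L_def)
  have ss: "sets (M \<Otimes>\<^sub>M M') = sets (borel \<Otimes>\<^sub>M borel)" by (rule sets_pair_measure_cong[OF s sM'])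
  have ssM: "sets (M \<Otimes>\<^sub>M M) = sets (borel \<Otimes>\<^sub>M borel)" by (rule sets_pair_measure_cong[OF s s])
  have Tm[measurable]: "T \<in> measurable (borel \<Otimes>\<^sub>M borel) (borel \<Otimes>\<^sub>M borel)" unfolding T_def by measurable
  define S where "S = (\<lambda>(x::real, y::real). (x, y + L))"
  have Sm[measurable]: "S \<in> measurable (borel \<Otimes>\<^sub>M borel) (borel \<Otimes>\<^sub>M borel)" unfolding S_def by measurable
  have SmM: "S \<in> measurable (M \<Otimes>\<^sub>M M) (borel \<Otimes>\<^sub>M borel)" using Sm measurable_cong_sets[OF ssM refl] by blast
  have prod: "M \<Otimes>\<^sub>M M' = distr (M \<Otimes>\<^sub>M M) (borel \<Otimes>\<^sub>M borel) S"
  proof -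
    have idM: "distr M borel (\<lambda>x. x) = M" by (rule distr_id2) (simp add: s)
    have "M \<Otimes>\<^sub>M M' = distr M borel (\<lambda>x. x) \<Otimes>\<^sub>M distr M borel (\<lambda>x. x + L)"
      by (simp only: idM M'_def)
    also have "\<dots> = distr (M \<Otimes>\<^sub>M M) (borel \<Otimes>\<^sub>M borel) (\<lambda>(x, y). (x, y + L))"
    proof (rule pair_measure_distr)
      show "(\<lambda>x. x) \<in> measurable M borel" by (rule measurable_ident_sets[OF s])
      show "(\<lambda>x. x + L) \<in> measurable M borel" by (rule meas_sh)
      show "sigma_finite_measure (distr M borel (\<lambda>x. x + L))" using sfM' by (simp add: M'_def)
    qed
    finally show ?thesis unfolding S_def .
  qed
  have "distr (M \<Otimes>\<^sub>M M') (borel \<Otimes>\<^sub>M borel) (udK J K) = distr (M \<Otimes>\<^sub>M M') (borel \<Otimes>\<^sub>M borel) T"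
  proof (rule distr_cong_AE)
    show "AE x in M \<Otimes>\<^sub>M M'. udK J K x = T x" using AE by eventually_elim (rule eq)
    show "udK J K \<in> measurable (M \<Otimes>\<^sub>M M') (borel \<Otimes>\<^sub>M borel)"
      using udK_meas measurable_cong_sets[OF ss refl] by blast
    show "T \<in> measurable (M \<Otimes>\<^sub>M M') (borel \<Otimes>\<^sub>M borel)"
      using Tm measurable_cong_sets[OF ss refl] by blast
  qed auto
  also have "\<dots> = distr (M \<Otimes>\<^sub>M M) (borel \<Otimes>\<^sub>M borel) (\<lambda>p. T (S p))"
    unfolding prod by (subst distr_distr[OF Tm SmM]) (simp add: comp_def)
  also have "\<dots> = distr (M \<Otimes>\<^sub>M M) (borel \<Otimes>\<^sub>M borel) (\<lambda>p. S ((\<lambda>(x,y). (y,x)) p))"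
    by (rule distr_cong) (auto simp: T_def S_def)
  also have "\<dots> = distr (distr (M \<Otimes>\<^sub>M M) (M \<Otimes>\<^sub>M M) (\<lambda>(x,y). (y,x))) (borel \<Otimes>\<^sub>M borel) S"
  proof -
    have SmM': "S \<in> measurable (M \<Otimes>\<^sub>M M) (borel \<Otimes>\<^sub>M borel)" by (rule SmM)
    have sw: "(\<lambda>(x,y). (y,x)) \<in> measurable (M \<Otimes>\<^sub>M M) (M \<Otimes>\<^sub>M M)" by (rule measurable_pair_swap')
    show ?thesis by (subst distr_distr[OF SmM' sw]) (simp add: comp_def)
  qed
  also have "\<dots> = M \<Otimes>\<^sub>M M'"
    unfolding swap_inv[OF sfM] prod[symmetric] ..
  finally have fin: "distr (M \<Otimes>\<^sub>M M') (borel \<Otimes>\<^sub>M borel) (udK J K) = M \<Otimes>\<^sub>M M'" .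
  have rl: "real_of_ereal (K - J) = L" by (simp add: j k L_def)
  show ?thesis unfolding udK_invariant_def rl M'_def[symmetric] by (rule fin)
qed



definition iterm :: "ereal \<Rightarrow> real \<Rightarrow> int \<Rightarrow> int" where
  "iterm J m n = (case J of ereal x \<Rightarrow> max (n - \<lfloor>x / m\<rfloor>) 0 | _ \<Rightarrow> 0)"

definition latt :: "real \<Rightarrow> ereal \<Rightarrow> bool" where
  "latt m J \<longleftrightarrow> J = \<infinity> \<or> (\<exists>jj::int. J = ereal (m * real_of_int jj))"

definition elatt :: "real \<Rightarrow> ereal \<Rightarrow> bool" where
  "elatt m J \<longleftrightarrow> J = \<infinity> \<or> (\<exists>jj::int. J = ereal (m * real_of_int (2 * jj)))"

lemma udK_term_latt:
  assumes "m > 0" "latt m J"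
  shows "udK_term J (m * real_of_int n) = m * real_of_int (iterm J m n)"
proof (cases "J = \<infinity>")
  case True then show ?thesis by (simp add: udK_term_def iterm_def)
next
  case False
  then obtain jj where jj: "J = ereal (m * real_of_int jj)" using assms by (auto simp: latt_def)
  have fl: "\<lfloor>m * real_of_int jj / m\<rfloor> = jj" using assms by simp
  have "max (m * real_of_int n - m * real_of_int jj) 0 = m * real_of_int (max (n - jj) 0)"
  proof -
    have le: "m * real_of_int n \<le> m * real_of_int jj \<longleftrightarrow> n \<le> jj" using assms(1) by simp
    show ?thesis
    proof (cases "n \<le> jj")
      case True then show ?thesis using le by (simp add: max_def)
    next
      case False then show ?thesis using le by (simp add: max_def right_diff_distrib)
    qed
  qed
  then show ?thesis using jj fl by (simp add: udK_term_def iterm_def)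
qed

definition Gmap :: "ereal \<Rightarrow> ereal \<Rightarrow> real \<Rightarrow> int \<times> int \<Rightarrow> int \<times> int" where
  "Gmap J K m p = (let s = fst p + snd p; t = iterm K m s - iterm J m s in (snd p + t, fst p - t))"

definition Emap :: "real \<Rightarrow> int \<times> int \<Rightarrow> real \<times> real" where
  "Emap m p = (m * real_of_int (fst p), m * real_of_int (snd p))"

lemma udK_Emap:
  assumes "m > 0" "latt m J" "latt m K"
  shows "udK J K (Emap m p) = Emap m (Gmap J K m p)"
proof -
  have s: "m * real_of_int (fst p) + m * real_of_int (snd p) = m * real_of_int (fst p + snd p)"
    by (simp add: algebra_simps)
  show ?thesis
    unfolding udK_def Emap_def Gmap_def Let_def
    apply (simp only: s udK_term_latt[OF assms(1,2)] udK_term_latt[OF assms(1,3)] fst_conv snd_conv prod.inject)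
    apply (simp add: algebra_simps)
    done
qed

lemma Emap_inj: "m > 0 \<Longrightarrow> Emap m p = Emap m q \<Longrightarrow> p = q"
  by (cases p; cases q) (auto simp: Emap_def)

lemma Gmap_invol:
  assumes "m > 0" "latt m J" "latt m K"
  shows "Gmap J K m (Gmap J K m p) = p"
proof -
  have "Emap m (Gmap J K m (Gmap J K m p)) = udK J K (Emap m (Gmap J K m p))"
    by (rule udK_Emap[OF assms, symmetric])
  also have "\<dots> = udK J K (udK J K (Emap m p))" by (simp add: udK_Emap[OF assms])
  also have "\<dots> = Emap m p" by (rule udK_invol)
  finally show ?thesis by (rule Emap_inj[OF assms(1)])
qed

lemma Gmap_bij:
  assumes "m > 0" "latt m J" "latt m K"
  shows "bij (Gmap J K m)"
  by (rule o_bij[of "Gmap J K m"]) (auto simp: fun_eq_iff Gmap_invol[OF assms])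

lemma Gmap_sum: "fst (Gmap J K m p) + snd (Gmap J K m p) = fst p + snd p"
  by (simp add: Gmap_def Let_def)

lemma parity_aux:
  fixes i j tJ tK jj kk :: int
  assumes "tJ = 0 \<or> (tJ = max (i + j - jj) 0 \<and> even jj)"
      and "tK = 0 \<or> (tK = max (i + j - kk) 0 \<and> even kk)"
  shows "(even (j + (tK - tJ)) = even i \<and> even (i - (tK - tJ)) = even j) \<or>
         (even (j + (tK - tJ)) = even j \<and> even (i - (tK - tJ)) = even i)"
  using assms by (elim disjE conjE; simp add: max_def split: if_splits; presburger)

lemma iterm_elatt:
  assumes "m > 0" "elatt m J"
  shows "\<exists>jj. iterm J m n = 0 \<or> (iterm J m n = max (n - jj) 0 \<and> even jj)"
proof (cases "J = \<infinity>")
  case True then show ?thesis by (simp add: iterm_def)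
next
  case False
  then obtain jj where jj: "J = ereal (m * real_of_int (2*jj))" using assms by (auto simp: elatt_def)
  have "m * real_of_int (2*jj) / m = real_of_int (2*jj)" using assms by simp
  then have "\<lfloor>m * real_of_int (2*jj) / m\<rfloor> = 2*jj" by (simp only: floor_of_int)
  then show ?thesis using jj by (auto simp: iterm_def)
qed

lemma Gmap_parity:
  assumes "m > 0" "elatt m J" "elatt m K"
  shows "(even (fst (Gmap J K m p)) = even (fst p) \<and> even (snd (Gmap J K m p)) = even (snd p)) \<or>
         (even (fst (Gmap J K m p)) = even (snd p) \<and> even (snd (Gmap J K m p)) = even (fst p))"
proof -
  obtain i j where p: "p = (i,j)" by (cases p)
  obtain jj where hJ: "iterm J m (i+j) = 0 \<or> (iterm J m (i+j) = max (i + j - jj) 0 \<and> even jj)"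
    using iterm_elatt[OF assms(1,2)] by blast
  obtain kk where hK: "iterm K m (i+j) = 0 \<or> (iterm K m (i+j) = max (i + j - kk) 0 \<and> even kk)"
    using iterm_elatt[OF assms(1,3)] by blast
  show ?thesis using parity_aux[OF hJ hK] by (auto simp: p Gmap_def Let_def)
qed


lemma bound_conv:
  assumes "m > 0" "X \<noteq> -\<infinity>"
  shows "(ereal (real_of_int i) \<le> (X - ereal c) / ereal m) \<longleftrightarrow> (ereal (m * real_of_int i) \<le> X - ereal c)"
  using assms by (cases X) (auto simp: pos_le_divide_eq mult.commute)

lemma sst_w_prod:
  assumes m: "m > 0" and th: "\<theta> > 0" and ka: "\<kappa> \<ge> 0" and JK: "J \<noteq> -\<infinity>" "K \<noteq> -\<infinity>"
  shows "sstbGeo_weight (1-\<theta>) (c/m) ((J - ereal c)/ereal m) \<kappa> (fst p) *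
         sstbGeo_weight (1-\<theta>) (c/m) ((K - ereal c)/ereal m) \<kappa> (snd p)
  = (if inR J K c (Emap m p) then ennreal (\<theta> powi (fst p + snd p) *
       ((if even (fst p) then 1 else \<kappa>) * (if even (snd p) then 1 else \<kappa>))) else 0)"
proof -
  have b1: "(c/m \<le> real_of_int i) \<longleftrightarrow> (c \<le> m * real_of_int i)" for i
    using m by (simp add: pos_divide_le_eq mult.commute)
  have nn: "0 \<le> \<theta> powi i * (if even i then 1 else \<kappa>)" for i
    using th ka by simp
  have pw: "\<theta> powi (i + j) = \<theta> powi i * \<theta> powi j" for i j
    using th by (simp add: power_int_add)
  show ?thesis
    unfolding sstbGeo_weight_def inR_def Emap_def
    using nn[of "fst p"] nn[of "snd p"]
    by (auto simp: b1 bound_conv[OF m JK(1)] bound_conv[OF m JK(2)] ennreal_mult[symmetric] pw ac_simps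
        simp del: ennreal_mult ennreal_mult' ennreal_mult'' )
qed


lemma part_aii_core:
  assumes m: "m > 0" and th: "\<theta> > 0" and JK: "J \<noteq> -\<infinity>" "K \<noteq> -\<infinity>"
    and cJ: "ereal c < J/2" and cK: "ereal c < K/2"
    and lJ: "latt m J" and lK: "latt m K"
    and ka: "\<kappa> = 1 \<or> (\<kappa> \<ge> 0 \<and> elatt m J \<and> elatt m K)"
  shows "udK_invariant J K (sstbGeo (1-\<theta>) (c/m) ((J - ereal c)/ereal m) \<kappa> m)
                           (sstbGeo (1-\<theta>) (c/m) ((K - ereal c)/ereal m) \<kappa> m)"
proof -
  have ka0: "\<kappa> \<ge> 0" using ka by auto
  define wJ where "wJ = sstbGeo_weight (1-\<theta>) (c/m) ((J - ereal c)/ereal m) \<kappa>"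
  define wK where "wK = sstbGeo_weight (1-\<theta>) (c/m) ((K - ereal c)/ereal m) \<kappa>"
  define ZJ where "ZJ = (\<integral>\<^sup>+ y. wJ y \<partial>count_space UNIV)"
  define ZK where "ZK = (\<integral>\<^sup>+ y. wK y \<partial>count_space UNIV)"
  define PJ where "PJ = density (count_space UNIV) (\<lambda>x. wJ x / ZJ)"
  define PK where "PK = density (count_space UNIV) (\<lambda>x. wK x / ZK)"
  define e where "e = (\<lambda>x::int. m * real_of_int x)"
  define r where "r = (\<lambda>(x::int,y::int). wJ x / ZJ * (wK y / ZK))"
  define D where "D = density (count_space UNIV) r"
  define G where "G = Gmap J K m"
  have muJ: "sstbGeo (1-\<theta>) (c/m) ((J - ereal c)/ereal m) \<kappa> m = distr PJ borel e"
    unfolding sstbGeo_def PJ_def ZJ_def wJ_def e_def ..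
  have muK: "sstbGeo (1-\<theta>) (c/m) ((K - ereal c)/ereal m) \<kappa> m = distr PK borel e"
    unfolding sstbGeo_def PK_def ZK_def wK_def e_def ..
  have finK: "finite_measure PK" unfolding PK_def ZK_def by (rule finite_normalized_density) simp
  have eK: "e \<in> measurable PK borel" by (simp add: PK_def measurable_cong_sets[OF sets_density refl])
  have eJ: "e \<in> measurable PJ borel" by (simp add: PJ_def measurable_cong_sets[OF sets_density refl])
  have sfK: "sigma_finite_measure (distr PK borel e)"
    using finite_measure.finite_measure_distr[OF finK eK] by (simp add: finite_measure_def)
  have p1: "distr PJ borel e \<Otimes>\<^sub>M distr PK borel e = distr (PJ \<Otimes>\<^sub>M PK) (borel \<Otimes>\<^sub>M borel) (\<lambda>(x, y). (e x, e y))"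
    by (rule pair_measure_distr[OF eJ eK sfK])
  have p2: "PJ \<Otimes>\<^sub>M PK = D"
  proof -
    have "PJ \<Otimes>\<^sub>M PK = density (count_space UNIV \<Otimes>\<^sub>M count_space UNIV) r"
      unfolding PJ_def PK_def r_def
    proof (rule pair_measure_density)
      show "sigma_finite_measure (count_space (UNIV::int set))" by (rule sigma_finite_measure_count_space)
      show "sigma_finite_measure (density (count_space UNIV) (\<lambda>x. wK x / ZK))"
        unfolding ZK_def by (rule sigma_finite_norm) simp
    qed simp_all
    also have "count_space UNIV \<Otimes>\<^sub>M count_space UNIV = count_space (UNIV :: (int \<times> int) set)"
      using pair_measure_countable[of "UNIV::int set" "UNIV::int set"] by simp
    finally show ?thesis unfolding D_def .
  qed
  have Eeq: "(\<lambda>(x, y). (e x, e y)) = Emap m" by (auto simp: fun_eq_iff e_def Emap_def)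
  have prod: "sstbGeo (1-\<theta>) (c/m) ((J - ereal c)/ereal m) \<kappa> m \<Otimes>\<^sub>M
              sstbGeo (1-\<theta>) (c/m) ((K - ereal c)/ereal m) \<kappa> m = distr D (borel \<Otimes>\<^sub>M borel) (Emap m)"
    unfolding muJ muK p1 p2 Eeq ..
  have EmD: "Emap m \<in> measurable D (borel \<Otimes>\<^sub>M borel)"
    by (simp add: D_def measurable_cong_sets[OF sets_density refl] space_pair_measure)
  have EmC: "Emap m \<in> measurable (count_space UNIV) (borel \<Otimes>\<^sub>M borel)" by (simp add: space_pair_measure)
  have GmD: "G \<in> measurable D (count_space UNIV)"
    by (simp add: D_def measurable_cong_sets[OF sets_density refl])
  have kinv: "(if even (fst (G p)) then 1 else \<kappa>) * (if even (snd (G p)) then 1 else \<kappa>)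
            = (if even (fst p) then 1 else \<kappa>) * (if even (snd p) then 1 else \<kappa>)" for p
  proof (cases "\<kappa> = 1")
    case True then show ?thesis by simp
  next
    case False
    then have "elatt m J" "elatt m K" using ka by auto
    from Gmap_parity[OF m this, of p] show ?thesis unfolding G_def by auto
  qed
  have rinv: "r (G p) = r p" for p
  proof -
    have inr: "inR J K c (Emap m (G p)) = inR J K c (Emap m p)"
      unfolding G_def udK_Emap[OF m lJ lK, symmetric] by (rule inR_udK_iff[OF JK cJ cK])
    have "wJ (fst (G p)) * wK (snd (G p)) = wJ (fst p) * wK (snd p)"
      unfolding wJ_def wK_def sst_w_prod[OF m th ka0 JK] inr kinv
      using Gmap_sum[of J K m p] by (simp add: G_def)
    then show ?thesis
      unfolding r_def by (simp add: case_prod_beta divide_ennreal_def ac_simps)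
  qed
  have "distr (distr D (borel \<Otimes>\<^sub>M borel) (Emap m)) (borel \<Otimes>\<^sub>M borel) (udK J K)
      = distr D (borel \<Otimes>\<^sub>M borel) (udK J K \<circ> Emap m)"
    by (rule distr_distr[OF udK_meas EmD])
  also have "\<dots> = distr D (borel \<Otimes>\<^sub>M borel) (Emap m \<circ> G)"
    by (rule distr_cong) (auto simp: G_def udK_Emap[OF m lJ lK])
  also have "\<dots> = distr (distr D (count_space UNIV) G) (borel \<Otimes>\<^sub>M borel) (Emap m)"
    by (rule distr_distr[OF EmC GmD, symmetric])
  also have "distr D (count_space UNIV) G = D"
    unfolding D_def by (rule distr_count_bij_inv[where r=r and G=G, OF _ rinv]) (simp add: G_def Gmap_bij[OF m lJ lK])
  finally show ?thesis unfolding udK_invariant_def prod .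
qed


lemma elatt_from:
  assumes J: "J \<noteq> -\<infinity>" and c: "in_mZ_inf m (ereal c)" and h: "in_mZ_inf (2*m) (J - ereal (2*c))"
  shows "elatt m J"
proof -
  obtain k0 :: int where k0: "c = m * real_of_int k0" using c by (auto simp: in_mZ_inf_def)
  show ?thesis
  proof (cases J)
    case PInf then show ?thesis by (simp add: elatt_def)
  next
    case MInf then show ?thesis using J by simp
  next
    case (real j)
    then obtain n :: int where n: "j - 2*c = 2*m*real_of_int n" using h by (auto simp: in_mZ_inf_def)
    have "j = m * real_of_int (2 * (n + k0))" using n k0 by (simp add: algebra_simps)
    then show ?thesis using real unfolding elatt_def by (intro disjI2 exI[of _ "n + k0"]) simp
  qed
qed

theorem proposition3p2:
  fixes J K :: ereal
  assumes "J \<noteq> -\<infinity>" and "K \<noteq> -\<infinity>"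
  shows
    \<comment> \<open>(a)(i)\<close>
    "(\<forall>(c::real) (lam::real).
        ereal c < J / 2 \<and> ereal c < K / 2 \<and> ((J = \<infinity> \<or> K = \<infinity>) \<longrightarrow> lam > 0) \<longrightarrow>
        udK_invariant J K (stExp lam c (J - ereal c)) (stExp lam c (K - ereal c)))
   \<and> \<comment> \<open>(a)(ii)\<close>
     (\<forall>(c::real) (m::real) (\<theta>::real) (\<kappa>::real).
        ereal c < J / 2 \<and> ereal c < K / 2 \<and> m > 0 \<and>
        in_mZ_inf m (ereal c) \<and> in_mZ_inf m J \<and> in_mZ_inf m K \<and>
        ((in_mZ_inf m (J - ereal (2*c)) \<and> in_mZ_inf m (K - ereal (2*c)) \<and>
            0 < \<theta> \<and> \<theta> < 1 \<and> \<kappa> = 1)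
         \<or> (in_mZ_inf (2*m) (J - ereal (2*c)) \<and> in_mZ_inf (2*m) (K - ereal (2*c)) \<and>
            0 < \<theta> \<and> \<theta> < 1 \<and> 0 < \<kappa> \<and> \<kappa> \<noteq> 1)
         \<or> (in_mZ m (J - ereal (2*c)) \<and> in_mZ m (K - ereal (2*c)) \<and>
            1 \<le> \<theta> \<and> \<kappa> = 1)
         \<or> (in_mZ_inf (2*m) (J - ereal (2*c)) \<and> in_mZ_inf (2*m) (K - ereal (2*c)) \<and>
            1 \<le> \<theta> \<and> 0 < \<kappa> \<and> \<kappa> \<noteq> 1)) \<longrightarrow>
        udK_invariant J K
          (sstbGeo (1 - \<theta>) (c / m) ((J - ereal c) / ereal m) \<kappa> m)
          (sstbGeo (1 - \<theta>) (c / m) ((K - ereal c) / ereal m) \<kappa> m))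
   \<and> \<comment> \<open>(b)\<close>
     (J = K \<longrightarrow> (\<forall>M. real_prob M \<longrightarrow> udK_invariant J K M M))
   \<and> \<comment> \<open>(c)\<close>
     (J < K \<longrightarrow>
        (\<forall>M. real_prob M \<and> (AE x in M. ereal x \<le> J / 2) \<longrightarrow> udK_invariant J K M M)
      \<and> (\<forall>M. real_prob M \<and> (AE x in M. J / 2 \<le> ereal x \<and> ereal x \<le> K - J / 2) \<longrightarrow>
            udK_invariant J K (return borel (real_of_ereal J / 2)) M)
      \<and> (K < \<infinity> \<longrightarrow>
          (\<forall>M. real_prob M \<and> (AE x in M. J / 2 \<le> ereal x) \<longrightarrow>
            udK_invariant J K M (distr M borel (\<lambda>x. x + real_of_ereal (K - J))))))"
proof (intro conjI allI impI)
  fix c lam :: real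
  assume h: "ereal c < J / 2 \<and> ereal c < K / 2 \<and> ((J = \<infinity> \<or> K = \<infinity>) \<longrightarrow> lam > 0)"
  show "udK_invariant J K (stExp lam c (J - ereal c)) (stExp lam c (K - ereal c))"
    using part_ai[OF assms] h by blast
next
  fix c m \<theta> \<kappa> :: real
  assume h: "ereal c < J / 2 \<and> ereal c < K / 2 \<and> m > 0 \<and>
        in_mZ_inf m (ereal c) \<and> in_mZ_inf m J \<and> in_mZ_inf m K \<and>
        ((in_mZ_inf m (J - ereal (2*c)) \<and> in_mZ_inf m (K - ereal (2*c)) \<and>
            0 < \<theta> \<and> \<theta> < 1 \<and> \<kappa> = 1)
         \<or> (in_mZ_inf (2*m) (J - ereal (2*c)) \<and> in_mZ_inf (2*m) (K - ereal (2*c)) \<and>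
            0 < \<theta> \<and> \<theta> < 1 \<and> 0 < \<kappa> \<and> \<kappa> \<noteq> 1)
         \<or> (in_mZ m (J - ereal (2*c)) \<and> in_mZ m (K - ereal (2*c)) \<and>
            1 \<le> \<theta> \<and> \<kappa> = 1)
         \<or> (in_mZ_inf (2*m) (J - ereal (2*c)) \<and> in_mZ_inf (2*m) (K - ereal (2*c)) \<and>
            1 \<le> \<theta> \<and> 0 < \<kappa> \<and> \<kappa> \<noteq> 1))"
  have th: "\<theta> > 0" using h by auto
  have lJ: "latt m J" and lK: "latt m K" using h by (auto simp: latt_def in_mZ_inf_def)
  have ka: "\<kappa> = 1 \<or> (\<kappa> \<ge> 0 \<and> elatt m J \<and> elatt m K)"
    using h elatt_from[OF assms(1), of m c] elatt_from[OF assms(2), of m c] by auto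
  show "udK_invariant J K
          (sstbGeo (1 - \<theta>) (c / m) ((J - ereal c) / ereal m) \<kappa> m)
          (sstbGeo (1 - \<theta>) (c / m) ((K - ereal c) / ereal m) \<kappa> m)"
    using part_aii_core[OF _ th assms _ _ lJ lK ka] h by blast
next
  fix M assume "J = K" "real_prob M"
  then show "udK_invariant J K M M" using part_b by simp
next
  fix M assume "J < K" "real_prob M \<and> (AE x in M. ereal x \<le> J / 2)"
  then show "udK_invariant J K M M" using part_ci assms by blast
next
  fix M assume "J < K" "real_prob M \<and> (AE x in M. J / 2 \<le> ereal x \<and> ereal x \<le> K - J / 2)"
  then show "udK_invariant J K (return borel (real_of_ereal J / 2)) M" using part_cii assms by blast
next
  fix M assume "J < K" "K < \<infinity>" "real_prob M \<and> (AE x in M. J / 2 \<le> ereal x)"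
  then show "udK_invariant J K M (distr M borel (\<lambda>x. x + real_of_ereal (K - J)))"
    using part_ciii assms by blast
qed


end
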